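(* Let $G$ be a simple digraph with $n$ vertices $v_1,\ldots,v_n$ and $m$ arcs, and let $M_1=m+\frac12\sum_{i=1}^n(d_i^+-d_i^-)^2$. Then $SLE(G)\le\sqrt{2M_1 n}$.
   Context: A simple digraph is an orientation of a simple undirected graph (no loops, and between two distinct vertices at most one arc, in one direction). $d_i^+,d_i^-$ are the out- and in-degree of $v_i$. The skew-adjacency matrix $S(G)=[s_{ij}]$ has $s_{ij}=1$ if $(v_i,v_j)$ is an arc, $s_{ij}=-1$ if $(v_j,v_i)$ is an arc, and $0$ otherwise. $\widetilde{D}(G)=\mathrm{diag}(d_1^+-d_1^-,\ldots,d_n^+-d_n^-)$, $\widetilde{SL}(G)=\widetilde{D}(G)-S(G)$, and $SLE(G)=\sum_{i=1}^n|\mu_i|$ where $\mu_1,\ldots,\mu_n$ are the eigenvalues of $\widetilde{SL}(G)$ counted with algebraic multiplicity. *)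

theory Defs
  imports "Jordan_Normal_Form.Char_Poly"
begin

text \<open>A simple digraph on vertices v_1..v_n is encoded with vertex set {0..<n} and an arc
  predicate arc i j meaning (v_i, v_j) is an arc.\<close>

definition simple_digraph :: "nat \<Rightarrow> (nat \<Rightarrow> nat \<Rightarrow> bool) \<Rightarrow> bool" where
  "simple_digraph n arc \<longleftrightarrow>
     (\<forall>i j. arc i j \<longrightarrow> i < n \<and> j < n) \<and>
     (\<forall>i. \<not> arc i i) \<and>
     (\<forall>i j. arc i j \<longrightarrow> \<not> arc j i)"

definition num_arcs :: "nat \<Rightarrow> (nat \<Rightarrow> nat \<Rightarrow> bool) \<Rightarrow> nat" where
  "num_arcs n arc = card {(i, j). i < n \<and> j < n \<and> arc i j}"

definition out_deg :: "nat \<Rightarrow> (nat \<Rightarrow> nat \<Rightarrow> bool) \<Rightarrow> nat \<Rightarrow> nat" where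
  "out_deg n arc i = card {j. j < n \<and> arc i j}"

definition in_deg :: "nat \<Rightarrow> (nat \<Rightarrow> nat \<Rightarrow> bool) \<Rightarrow> nat \<Rightarrow> nat" where
  "in_deg n arc i = card {j. j < n \<and> arc j i}"

definition skew_adj :: "nat \<Rightarrow> (nat \<Rightarrow> nat \<Rightarrow> bool) \<Rightarrow> real mat" where
  "skew_adj n arc = mat n n (\<lambda>(i, j). if arc i j then 1 else if arc j i then -1 else 0)"

definition deg_diff_mat :: "nat \<Rightarrow> (nat \<Rightarrow> nat \<Rightarrow> bool) \<Rightarrow> real mat" where
  "deg_diff_mat n arc = mat n n (\<lambda>(i, j). if i = j
      then real (out_deg n arc i) - real (in_deg n arc i) else 0)"

definition skew_lap :: "nat \<Rightarrow> (nat \<Rightarrow> nat \<Rightarrow> bool) \<Rightarrow> real mat" where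
  "skew_lap n arc = deg_diff_mat n arc - skew_adj n arc"

text \<open>Eigenvalues with algebraic multiplicity: the complex roots (multiset) of the
  characteristic polynomial.\<close>
definition SLE :: "nat \<Rightarrow> (nat \<Rightarrow> nat \<Rightarrow> bool) \<Rightarrow> real" where
  "SLE n arc = sum_mset (image_mset cmod
      (proots (char_poly (map_mat complex_of_real (skew_lap n arc)))))"

end

theory Submission imports Defs "Jordan_Normal_Form.Schur_Decomposition" begin

definition fro :: "complex mat \<Rightarrow> real" where
  "fro A = (\<Sum>i<dim_row A. \<Sum>j<dim_col A. (cmod (A $$ (i,j)))^2)"

definition adj :: "complex mat \<Rightarrow> complex mat" where
  "adj A = mat (dim_col A) (dim_row A) (\<lambda>(i,j). cnj (A $$ (j,i)))"

definition tr :: "complex mat \<Rightarrow> complex" where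
  "tr A = (\<Sum>i<dim_row A. A $$ (i,i))"

lemma adj_carrier[simp]: "A \<in> carrier_mat n m \<Longrightarrow> adj A \<in> carrier_mat m n"
  by (auto simp: adj_def)
lemma adj_dims[simp]: "dim_row (adj A) = dim_col A" "dim_col (adj A) = dim_row A"
  by (auto simp: adj_def)
lemma adj_index[simp]: "i < dim_col A \<Longrightarrow> j < dim_row A \<Longrightarrow> adj A $$ (i,j) = cnj (A $$ (j,i))"
  by (auto simp: adj_def)
lemma adj_adj[simp]: "adj (adj A) = A"
  by (intro eq_matI, auto)

lemma adj_mult: assumes "A \<in> carrier_mat n k" "B \<in> carrier_mat k m"
  shows "adj (A * B) = adj B * adj A"
proof (rule eq_matI)
  fix i j assume ij: "i < dim_row (adj B * adj A)" "j < dim_col (adj B * adj A)"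
  then show "adj (A * B) $$ (i, j) = (adj B * adj A) $$ (i, j)"
    using assms by (auto simp: scalar_prod_def intro!: sum.cong)
qed (use assms in auto)

lemma tr_comm: assumes "A \<in> carrier_mat n k" "B \<in> carrier_mat k n"
  shows "tr (A * B) = tr (B * A)"
proof -
  have "tr (A * B) = (\<Sum>i<n. \<Sum>j<k. A $$ (i,j) * B $$ (j,i))"
    using assms by (auto simp: tr_def scalar_prod_def atLeast0LessThan intro!: sum.cong)
  also have "\<dots> = (\<Sum>j<k. \<Sum>i<n. B $$ (j,i) * A $$ (i,j))"
    by (subst sum.swap) (simp add: mult.commute)
  also have "\<dots> = tr (B * A)"
    using assms by (auto simp: tr_def scalar_prod_def atLeast0LessThan intro!: sum.cong)
  finally show ?thesis .
qed

lemma tr_adj: "tr (A * adj A) = complex_of_real (fro A)"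
proof -
  have "tr (A * adj A) = (\<Sum>i<dim_row A. \<Sum>j<dim_col A. A $$ (i,j) * cnj (A $$ (i,j)))"
    by (auto simp: tr_def scalar_prod_def atLeast0LessThan intro!: sum.cong)
  also have "\<dots> = complex_of_real (fro A)"
    by (simp only: fro_def of_real_sum complex_norm_square)
  finally show ?thesis .
qed

lemma fro_unitary: assumes A: "A \<in> carrier_mat n n" and U: "U \<in> carrier_mat n n"
  and UU: "adj U * U = 1\<^sub>m n"
  shows "fro (adj U * A * U) = fro A"
proof -
  have UU': "U * adj U = 1\<^sub>m n" using mat_mult_left_right_inverse[OF adj_carrier[OF U] U UU] .
  have aA: "adj A \<in> carrier_mat n n" using A by simp
  have aU: "adj U \<in> carrier_mat n n" using U by simp
  let ?B = "adj U * A * U"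
  have "adj ?B = adj U * adj (adj U * A)"
    by (rule adj_mult[of _ n n _ n], insert A U aU, auto)
  also have "adj (adj U * A) = adj A * U"
    using adj_mult[OF aU A] by simp
  finally have aB: "adj ?B = adj U * (adj A * U)" .
  have UX: "U * (adj U * X) = X" if "X \<in> carrier_mat n n" for X
    using that U aU UU' by (simp flip: assoc_mult_mat[of U n n "adj U" n X n])
  have c1: "adj U * (adj A * U) \<in> carrier_mat n n" "A * U \<in> carrier_mat n n" "adj A * U \<in> carrier_mat n n"
    using A U aU aA by auto
  have "?B * adj ?B = (adj U * (A * U)) * (adj U * (adj A * U))"
    unfolding aB using A U aU by (simp add: assoc_mult_mat[of "adj U" n n A n U n])
  also have "\<dots> = adj U * ((A * U) * (adj U * (adj A * U)))"
    by (rule assoc_mult_mat[OF aU c1(2) c1(1)])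
  also have "(A * U) * (adj U * (adj A * U)) = A * (U * (adj U * (adj A * U)))"
    by (rule assoc_mult_mat[OF A U c1(1)])
  finally have "?B * adj ?B = adj U * (A * (U * (adj U * (adj A * U))))" .
  also have "\<dots> = adj U * (A * (adj A * U))" using UX[of "adj A * U"] aA U by simp
  finally have e1: "?B * adj ?B = adj U * (A * (adj A * U))" .
  have "tr (?B * adj ?B) = tr ((A * (adj A * U)) * adj U)"
    unfolding e1 by (rule tr_comm[of _ n n], insert aU A aA U, auto)
  also have "(A * (adj A * U)) * adj U = A * ((adj A * U) * adj U)"
    by (rule assoc_mult_mat[OF A c1(3) aU])
  also have "(adj A * U) * adj U = adj A"
    using assoc_mult_mat[OF aA U aU] UU' aA right_mult_one_mat[OF aA] by simp
  finally have "complex_of_real (fro ?B) = complex_of_real (fro A)" by (simp add: tr_adj)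
  thus ?thesis by simp
qed

definition nz :: "complex vec \<Rightarrow> complex" where
  "nz w = complex_of_real (1 / sqrt (Re (w \<bullet>c w)))"

lemma nz_prod: assumes w: "w \<in> carrier_vec n" "w' \<in> carrier_vec n"
  shows "(nz w \<cdot>\<^sub>v w) \<bullet>c (nz w' \<cdot>\<^sub>v w') = nz w * nz w' * (w \<bullet>c w')"
  using w by (simp add: conjugate_smult_vec nz_def)

lemma nz_self: assumes w: "w \<in> carrier_vec n" "w \<noteq> 0\<^sub>v n"
  shows "nz w * nz w * (w \<bullet>c w) = 1"
proof -
  have "w \<bullet>c w > 0" using w by simp
  then have im: "Im (w \<bullet>c w) = 0" and re: "Re (w \<bullet>c w) > 0"
    by (auto simp: less_complex_def)
  then have eq: "w \<bullet>c w = complex_of_real (Re (w \<bullet>c w))" by (simp add: complex_eq_iff)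
  show ?thesis
    by (subst eq, unfold nz_def, simp only: of_real_mult[symmetric])
       (use re in \<open>simp add: field_simps\<close>)
qed

lemma exists_unitary: assumes v: "v \<in> carrier_vec n" and v0: "v \<noteq> 0\<^sub>v n"
  shows "\<exists>U \<in> carrier_mat n n. adj U * U = 1\<^sub>m n \<and> (\<exists>c. col U 0 = c \<cdot>\<^sub>v v \<and> c \<noteq> 0)"
proof -
  interpret cof_vec_space n "TYPE(complex)" .
  define b where "b = basis_completion v"
  define ws where "ws = gram_schmidt n b"
  from basis_completion[OF v v0, folded b_def]
  have dist_b: "distinct b" and indep: "\<not> lin_dep (set b)" and b: "set b \<subseteq> carrier_vec n"
    and len_b: "length b = n" by auto
  have n: "n \<noteq> 0" using v v0 by (cases n, auto)
  from len_b n obtain vs where bv: "b = v # vs" unfolding b_def basis_completion_def Let_def by auto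
  from gram_schmidt_result[OF b dist_b indep refl, folded ws_def]
  have ws: "set ws \<subseteq> carrier_vec n" "corthogonal ws" "length ws = n"
    by (auto simp: len_b)
  from gram_schmidt_hd[OF v, of vs, folded bv] have hdws: "hd ws = v" unfolding ws_def .
  define us where "us = map (\<lambda>w. nz w \<cdot>\<^sub>v w) ws"
  define U where "U = mat_of_cols n us"
  have wsi: "ws ! i \<in> carrier_vec n" if "i < n" for i using ws that by auto
  have ws0: "ws ! i \<noteq> 0\<^sub>v n" if "i < n" for i
    using corthogonalD[OF ws(2), of i i] that ws(3) by auto
  have U: "U \<in> carrier_mat n n" unfolding U_def us_def using ws by auto
  have colU: "col U j = nz (ws ! j) \<cdot>\<^sub>v ws ! j" if "j < n" for j
    unfolding U_def us_def using that ws wsi[OF that] by (subst col_mat_of_cols, auto)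
  have "adj U * U = 1\<^sub>m n"
  proof (rule eq_matI)
    fix i j assume "i < dim_row (1\<^sub>m n)" "j < dim_col (1\<^sub>m n)"
    then have ij: "i < n" "j < n" by auto
    have "(adj U * U) $$ (i,j) = col U j \<bullet>c col U i"
      using U ij by (auto simp: scalar_prod_def intro!: sum.cong)
    also have "\<dots> = nz (ws ! j) * nz (ws ! i) * (ws ! j \<bullet>c ws ! i)"
      unfolding colU[OF ij(1)] colU[OF ij(2)] by (rule nz_prod[OF wsi[OF ij(2)] wsi[OF ij(1)]])
    also have "\<dots> = 1\<^sub>m n $$ (i,j)"
    proof (cases "i = j")
      case True thus ?thesis using nz_self[OF wsi[OF ij(1)] ws0[OF ij(1)]] ij by simp
    next
      case False thus ?thesis using corthogonalD[OF ws(2), of j i] ij ws(3) by simp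
    qed
    finally show "(adj U * U) $$ (i,j) = 1\<^sub>m n $$ (i,j)" .
  qed (use U in auto)
  moreover have "col U 0 = nz v \<cdot>\<^sub>v v" using colU[of 0] n hdws ws(3)
    by (cases ws, auto)
  moreover have "nz v \<noteq> 0" using nz_self[OF v v0] by auto
  ultimately show ?thesis using U by blast
qed

lemma fro_nonneg: "fro A \<ge> 0"
  unfolding fro_def by (intro sum_nonneg) auto

lemma schur_ineq:
  assumes "A \<in> carrier_mat n n" "char_poly A = (\<Prod>a\<leftarrow>es. [:- a, 1:])"
  shows "(\<Sum>a\<leftarrow>es. (cmod a)^2) \<le> fro A"
  using assms
proof (induct es arbitrary: n A)
  case Nil
  then show ?case using fro_nonneg by simp
next
  case (Cons e es n A)
  from Cons have A: "A \<in> carrier_mat n n" by auto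
  from Cons(3)
  have cp: "char_poly A = [: -e, 1 :] * (\<Prod>e \<leftarrow> es. [:- e, 1:])" by auto
  have mon: "monic (\<Prod>e\<leftarrow> es. [:- e, 1:])" by (rule monic_prod_list, auto)
  have deg: "degree (char_poly A) = Suc (degree (\<Prod>e\<leftarrow> es. [:- e, 1:]))" unfolding cp
    by (subst degree_mult_eq, insert mon, auto)
  with degree_monic_char_poly[OF A] have n: "n \<noteq> 0" by auto
  have ev: "eigenvalue A e"
    unfolding eigenvalue_root_char_poly[OF A] cp by simp
  from find_eigenvector[OF A ev] obtain v where "eigenvector A v e" by blast
  then have v: "v \<in> carrier_vec n" and v0: "v \<noteq> 0\<^sub>v n" and Av: "A *\<^sub>v v = e \<cdot>\<^sub>v v"
    using A unfolding eigenvector_def by auto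
  from exists_unitary[OF v v0] obtain U c where U: "U \<in> carrier_mat n n"
    and UU: "adj U * U = 1\<^sub>m n" and cU: "col U 0 = c \<cdot>\<^sub>v v" by blast
  have UU': "U * adj U = 1\<^sub>m n" using mat_mult_left_right_inverse[OF adj_carrier[OF U] U UU] .
  have aU: "adj U \<in> carrier_mat n n" using U by simp
  define B where "B = adj U * A * U"
  have B: "B \<in> carrier_mat n n" unfolding B_def using U A aU by auto
  have froB: "fro B = fro A" unfolding B_def by (rule fro_unitary[OF A U UU])
  have "A = U * B * adj U"
  proof -
    have "U * B * adj U = (U * adj U) * A * (U * adj U)"
      unfolding B_def using U A aU
      by (simp add: assoc_mult_mat[of _ n n _ n _ n] mult_carrier_mat[of _ n n _ n])
    also have "\<dots> = A" using UU' A by simp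
    finally show ?thesis by simp
  qed
  then have "similar_mat_wit A B U (adj U)"
    unfolding similar_mat_wit_def Let_def using A B U aU UU UU' assoc_mult_mat[OF U B aU] by auto
  then have simAB: "similar_mat A B" unfolding similar_mat_def by blast
  have Ucol: "A *\<^sub>v col U 0 = e \<cdot>\<^sub>v col U 0"
    unfolding cU using mult_mat_vec[OF A v] Av by (simp add: smult_smult_assoc mult.commute)
  have B0: "B $$ (i, 0) = (if i = 0 then e else 0)" if i: "i < n" for i
  proof -
    have "B = adj U * (A * U)" unfolding B_def using assoc_mult_mat[OF aU A U] by simp
    then have "B $$ (i,0) = row (adj U) i \<bullet> col (A * U) 0" using i n aU A U by auto
    also have "col (A * U) 0 = e \<cdot>\<^sub>v col U 0" using col_mult2[OF A U, of 0] n Ucol by simp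
    also have "row (adj U) i \<bullet> (e \<cdot>\<^sub>v col U 0) = e * (row (adj U) i \<bullet> col U 0)"
      using aU U by simp
    also have "row (adj U) i \<bullet> col U 0 = (adj U * U) $$ (i, 0)" using i n aU U by auto
    finally show ?thesis using UU i n by simp
  qed
  obtain B1 B2 B0' B3 where sp: "split_block B 1 1 = (B1,B2,B0',B3)"
    by (cases "split_block B 1 1", auto)
  from B n have "dim_row B = 1 + (n-1)" "dim_col B = 1 + (n-1)" by auto
  from split_block[OF sp this] have B2: "B2 \<in> carrier_mat 1 (n-1)"
    and B3: "B3 \<in> carrier_mat (n-1) (n-1)" and Bblock: "B = four_block_mat B1 B2 B0' B3" by auto
  have B1id: "B1 = mat 1 1 (\<lambda>_. e)"
    using sp[unfolded split_block_def Let_def] B0[of 0] n by auto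
  have B0id: "B0' = 0\<^sub>m (n-1) 1"
    using sp[unfolded split_block_def Let_def] B0 B n by auto
  have B3id: "B3 = mat (n-1) (n-1) (\<lambda>(i,j). B $$ (i+1, j+1))"
    using sp[unfolded split_block_def Let_def] B by auto
  have B1: "B1 \<in> carrier_mat 1 1" unfolding B1id by auto
  have "char_poly B = [: -e,1 :] * (\<Prod> e \<leftarrow> es. [:- e, 1:])"
    using cp char_poly_similar[OF simAB] by simp
  also have "char_poly B = char_poly B1 * char_poly B3"
    unfolding Bblock B0id by (rule char_poly_four_block_zeros_col[OF B1 B2 B3])
  also have "char_poly B1 = [: -e,1 :]"
    by (simp add: B1id char_poly_defs det_def sign_def)
  finally have cp3: "char_poly B3 = (\<Prod> e \<leftarrow> es. [:- e, 1:])"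
    by (metis mult_cancel_left pCons_eq_0_iff zero_neq_one)
  have IH: "(\<Sum>a\<leftarrow>es. (cmod a)^2) \<le> fro B3" by (rule Cons(1)[OF B3 cp3])
  obtain m where nm: "n = Suc m" using n by (cases n, auto)
  define f where "f i j = (cmod (B $$ (i,j)))^2" for i j
  have f0: "f i j \<ge> 0" for i j unfolding f_def by simp
  have "fro B = (\<Sum>i<Suc m. \<Sum>j<Suc m. f i j)" using B nm by (simp add: fro_def f_def)
  also have "\<dots> = (\<Sum>j<Suc m. f 0 j) + (\<Sum>i<m. f (Suc i) 0 + (\<Sum>j<m. f (Suc i) (Suc j)))"
    by (simp add: sum.lessThan_Suc_shift del: sum.lessThan_Suc)
  also have "\<dots> \<ge> f 0 0 + (\<Sum>i<m. \<Sum>j<m. f (Suc i) (Suc j))"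
  proof (rule add_mono)
    show "f 0 0 \<le> (\<Sum>j<Suc m. f 0 j)"
      by (simp add: sum.lessThan_Suc_shift f0 sum_nonneg del: sum.lessThan_Suc)
    show "(\<Sum>i<m. \<Sum>j<m. f (Suc i) (Suc j)) \<le> (\<Sum>i<m. f (Suc i) 0 + (\<Sum>j<m. f (Suc i) (Suc j)))"
      by (intro sum_mono) (simp add: f0)
  qed
  finally have "f 0 0 + (\<Sum>i<m. \<Sum>j<m. f (Suc i) (Suc j)) \<le> fro B" .
  moreover have "fro B3 = (\<Sum>i<m. \<Sum>j<m. f (Suc i) (Suc j))"
    unfolding B3id fro_def f_def using nm by simp
  moreover have "f 0 0 = (cmod e)^2" unfolding f_def using B0[of 0] n by simp
  ultimately show ?case using IH froB by simp
qed

lemma cauchy_list: fixes xs :: "real list"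
  shows "(sum_list xs)^2 \<le> real (length xs) * sum_list (map (\<lambda>x. x^2) xs)"
proof -
  define k where "k = length xs"
  define x where "x i = xs ! i" for i
  have s1: "sum_list xs = (\<Sum>i<k. x i)"
    unfolding k_def x_def by (simp add: sum_list_sum_nth atLeast0LessThan)
  have s2: "sum_list (map (\<lambda>x. x^2) xs) = (\<Sum>i<k. (x i)^2)"
    unfolding k_def x_def by (simp add: sum_list_sum_nth atLeast0LessThan)
  have "(\<Sum>i<k. x i)^2 = (\<Sum>i<k. \<Sum>j<k. x i * x j)"
    by (simp add: power2_eq_square sum_product)
  also have "\<dots> \<le> (\<Sum>i<k. \<Sum>j<k. ((x i)^2 + (x j)^2) / 2)"
  proof (intro sum_mono)
    fix i j
    have "0 \<le> (x i - x j)^2" by simp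
    then show "x i * x j \<le> ((x i)^2 + (x j)^2) / 2" by (simp add: power2_eq_square algebra_simps)
  qed
  also have "\<dots> = (\<Sum>i<k. \<Sum>j<k. (x i)^2 / 2) + (\<Sum>i<k. \<Sum>j<k. (x j)^2 / 2)"
    by (simp add: sum.distrib add_divide_distrib)
  also have "\<dots> = real k * (\<Sum>i<k. (x i)^2)"
    by (simp add: sum_divide_distrib[symmetric] sum_distrib_left[symmetric])
  finally show ?thesis unfolding s1 s2 k_def .
qed

lemma count_arcs: fixes n :: nat and arc :: "nat \<Rightarrow> nat \<Rightarrow> bool" shows "(\<Sum>i<n. \<Sum>j<n. (if arc i j then 1 else 0 :: real)) = real (num_arcs n arc)"
proof -
  have "(\<Sum>i<n. \<Sum>j<n. (if arc i j then 1 else 0 :: real)) = (\<Sum>i<n. real (card {j \<in> {..<n}. arc i j}))"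
    by (intro sum.cong refl) (simp add: sum.inter_filter[symmetric])
  also have "\<dots> = real (\<Sum>i<n. card {j \<in> {..<n}. arc i j})" by simp
  also have "(\<Sum>i<n. card {j \<in> {..<n}. arc i j}) = card (Sigma {..<n} (\<lambda>i. {j \<in> {..<n}. arc i j}))"
    by (rule card_SigmaI[symmetric]) auto
  also have "Sigma {..<n} (\<lambda>i. {j \<in> {..<n}. arc i j}) = {(i, j). i < n \<and> j < n \<and> arc i j}"
    by auto
  finally show ?thesis unfolding num_arcs_def .
qed

lemma proots_lin: "proots (\<Prod>a\<leftarrow>es. [:- a, 1:]) = mset (es :: complex list)"
proof (induct es)
  case (Cons a es)
  have nz: "(\<Prod>a\<leftarrow>es. [:- a, 1:]) \<noteq> 0" by (auto simp: prod_list_zero_iff)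
  have "(\<Prod>a\<leftarrow>a # es. [:- a, 1:]) = [:- a, 1:] * (\<Prod>a\<leftarrow>es. [:- a, 1:])" by simp
  then have "proots (\<Prod>a\<leftarrow>a # es. [:- a, 1:]) = proots [:- a, 1:] + proots (\<Prod>a\<leftarrow>es. [:- a, 1:])"
    using proots_mult[of "[:- a, 1:]", OF _ nz] by simp
  then show ?case using Cons by simp
qed simp

theorem corollary2:
  fixes n :: nat and arc :: "nat \<Rightarrow> nat \<Rightarrow> bool"
  assumes "simple_digraph n arc"
  shows "SLE n arc \<le> sqrt (2 * (real (num_arcs n arc) + 1/2 *
           (\<Sum>i<n. (real (out_deg n arc i) - real (in_deg n arc i))^2)) * real n)"
proof -
  have irr: "\<not> arc i i" for i using assms unfolding simple_digraph_def by auto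
  have asym: "arc i j \<Longrightarrow> \<not> arc j i" for i j using assms unfolding simple_digraph_def by auto
  define d where "d i = real (out_deg n arc i) - real (in_deg n arc i)" for i
  define L where "L = skew_lap n arc"
  define Lc where "Lc = map_mat complex_of_real L"
  have L: "L \<in> carrier_mat n n"
    unfolding L_def skew_lap_def deg_diff_mat_def skew_adj_def by auto
  have Lc: "Lc \<in> carrier_mat n n" unfolding Lc_def using L by auto
  have Lij: "L $$ (i,j) = (if i = j then d i else 0) - (if arc i j then 1 else if arc j i then -1 else 0)"
    if "i < n" "j < n" for i j
    using that unfolding L_def skew_lap_def deg_diff_mat_def skew_adj_def d_def by auto
  have sq: "(cmod (Lc $$ (i,j)))^2 = (if i = j then (d i)^2 else 0) + (if arc i j then 1 else 0)
      + (if arc j i then 1 else 0)" if "i < n" "j < n" for i j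
  proof -
    have "(cmod (Lc $$ (i,j)))^2 = (L $$ (i,j))^2" unfolding Lc_def using that L by auto
    also have "\<dots> = (if i = j then (d i)^2 else 0) + (if arc i j then 1 else 0)
      + (if arc j i then 1 else 0)"
      unfolding Lij[OF that] using irr[of i] asym[of i j] asym[of j i] by auto
    finally show ?thesis .
  qed
  have froL: "fro Lc = (\<Sum>i<n. (d i)^2) + 2 * real (num_arcs n arc)"
  proof -
    have "fro Lc = (\<Sum>i<n. \<Sum>j<n. (if i = j then (d i)^2 else 0) + (if arc i j then 1 else 0)
      + (if arc j i then 1 else 0))"
      unfolding fro_def using Lc sq by (auto intro!: sum.cong)
    also have "\<dots> = (\<Sum>i<n. \<Sum>j<n. (if i = j then (d i)^2 else 0))
        + (\<Sum>i<n. \<Sum>j<n. (if arc i j then 1 else 0)) + (\<Sum>i<n. \<Sum>j<n. (if arc j i then 1 else 0))"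
      by (simp add: sum.distrib)
    also have "(\<Sum>i<n. \<Sum>j<n. (if arc j i then 1 else 0 :: real)) = (\<Sum>i<n. \<Sum>j<n. (if arc i j then 1 else 0))"
      by (rule sum.swap)
    also have "(\<Sum>i<n. \<Sum>j<n. (if i = j then (d i)^2 else 0)) = (\<Sum>i<n. (d i)^2)"
      by (simp add: if_distrib cong: if_cong)
    finally show ?thesis using count_arcs[of arc n] by simp
  qed
  obtain es where cp: "char_poly Lc = (\<Prod>a\<leftarrow>es. [:- a, 1:])" and len: "length es = n"
    using char_poly_factorized[OF Lc] by blast
  have "proots (char_poly Lc) = mset es"
    unfolding cp by (rule proots_lin)
  then have SLE: "SLE n arc = sum_list (map cmod es)"
    unfolding SLE_def Lc_def L_def by (simp add: sum_mset_sum_list flip: mset_map)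
  have schur: "(\<Sum>a\<leftarrow>es. (cmod a)^2) \<le> fro Lc" by (rule schur_ineq[OF Lc cp])
  have "(sum_list (map cmod es))^2 \<le> real n * (\<Sum>a\<leftarrow>es. (cmod a)^2)"
    using cauchy_list[of "map cmod es"] len by (simp add: o_def)
  also have "\<dots> \<le> real n * fro Lc" by (rule mult_left_mono[OF schur]) simp
  also have "\<dots> = 2 * (real (num_arcs n arc) + 1/2 *
           (\<Sum>i<n. (real (out_deg n arc i) - real (in_deg n arc i))^2)) * real n"
    unfolding froL d_def by (simp add: algebra_simps)
  finally show ?thesis unfolding SLE by (rule real_le_rsqrt)
qed
end
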